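(* Let $(\mathfrak{g},[\cdot,\ldots,\cdot],\varepsilon,\alpha)$ be an $n$-Hom-Lie color algebra with $n\geq3$ and let $\mathcal{N}$ be a bijective Nijenhuis operator on it. Let $a\in\mathfrak{g}_0$ with $\alpha(a)=a$ and $\mathcal{N}(a)\in Z(\mathfrak{g})$. Then $\mathcal{N}$ is a Nijenhuis operator on the $(n-1)$-Hom-Lie color algebra $(\mathfrak{g},\{\cdot,\ldots,\cdot\},\varepsilon,\alpha)$, where $\{x_1,\ldots,x_{n-1}\}=[a,x_1,\ldots,x_{n-1}]$.
   Context: $\mathbb{K}$ is a field of characteristic zero and $\Gamma$ an abelian group; $\mathfrak{g}_0$ is the degree-$0$ component. A bicharacter is a map $\varepsilon:\Gamma\times\Gamma\to\mathbb{K}\setminus\{0\}$ with $\varepsilon(a,b)\varepsilon(b,a)=1$, $\varepsilon(a,b+c)=\varepsilon(a,b)\varepsilon(a,c)$, $\varepsilon(a+b,c)=\varepsilon(a,c)\varepsilon(b,c)$. For homogeneous $x,y$, $\varepsilon(x,y)=\varepsilon(|x|,|y|)$ and $\varepsilon(x,y_1+\dots+y_k)=\varepsilon(|x|,|y_1|+\dots+|y_k|)$ ($=1$ for an empty sum). An $m$-Hom-Lie color algebra $(\mathfrak{g},[\cdot,\ldots,\cdot],\varepsilon,\alpha)$ is a $\Gamma$-graded vector space with an $m$-linear bracket of degree zero, a bicharacter $\varepsilon$ and a degree-zero linear map $\alpha$ such that for homogeneous elements: (i) $[x_1,\ldots,x_i,x_{i+1},\ldots,x_m]=-\varepsilon(x_i,x_{i+1})[x_1,\ldots,x_{i+1},x_i,\ldots,x_m]$;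 (ii) $[\alpha(x_1),\ldots,\alpha(x_{m-1}),[y_1,\ldots,y_m]]=\sum_{i=1}^m\varepsilon(x_1+\dots+x_{m-1},y_1+\dots+y_{i-1})[\alpha(y_1),\ldots,\alpha(y_{i-1}),[x_1,\ldots,x_{m-1},y_i],\alpha(y_{i+1}),\ldots,\alpha(y_m)]$. The center is $Z(\mathfrak{g})=\{x:[x,y_1,\ldots,y_{m-1}]=0\ \forall y_i\}$. For an $m$-ary bracket and a degree-zero linear $\mathcal{N}$, set $[\cdot]^0_{\mathcal{N}}=[\cdot]$ and $[x_1,\ldots,x_m]^j_{\mathcal{N}}=\sum_{i_1<\dots<i_j}[x_1,\ldots,\mathcal{N}x_{i_1},\ldots,\mathcal{N}x_{i_j},\ldots,x_m]-\mathcal{N}([x_1,\ldots,x_m]^{j-1}_{\mathcal{N}})$ for $1\le j\le m-1$ ($\mathcal{N}$ applied exactly at positions $i_1,\ldots,i_j$). $\mathcal{N}$ is a Nijenhuis operator on the $m$-ary algebra if $\mathcal{N}\circ\alpha=\alpha\circ\mathcal{N}$ and $[\mathcal{N}x_1,\ldots,\mathcal{N}x_m]=\mathcal{N}([x_1,\ldots,x_m]^{m-1}_{\mathcal{N}})$. *)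

theory Defs
  imports Complex_Main
begin

text \<open>A \<Gamma>-graded vector space over a field 'k (characteristic zero is imposed in the
  theorem) with carrier type 'v, scalar multiplication scale, and homogeneous
  components V g (g in the abelian group 'g).  Degrees are carried explicitly:
  an element x is homogeneous of degree g iff x \<in> V g.\<close>

definition graded_space ::
  "('k::field \<Rightarrow> 'v::ab_group_add \<Rightarrow> 'v) \<Rightarrow> ('g::ab_group_add \<Rightarrow> 'v set) \<Rightarrow> bool" where
  "graded_space scale V \<longleftrightarrow>
     vector_space scale \<and>
     (\<forall>g. 0 \<in> V g \<and> (\<forall>x\<in>V g. \<forall>y\<in>V g. x + y \<in> V g) \<and> (\<forall>c. \<forall>x\<in>V g. scale c x \<in> V g)) \<and>
     (\<forall>x. \<exists>!f. finite {g. f g \<noteq> 0} \<and> (\<forall>g. f g \<in> V g) \<and> x = sum f {g. f g \<noteq> 0})"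

definition bicharacter :: "('g::ab_group_add \<Rightarrow> 'g \<Rightarrow> 'k::field) \<Rightarrow> bool" where
  "bicharacter eps \<longleftrightarrow>
     (\<forall>a b. eps a b \<noteq> 0) \<and>
     (\<forall>a b. eps a b * eps b a = 1) \<and>
     (\<forall>a b c. eps a (b + c) = eps a b * eps a c) \<and>
     (\<forall>a b c. eps (a + b) c = eps a c * eps b c)"

definition homog :: "('g \<Rightarrow> 'v set) \<Rightarrow> 'v list \<Rightarrow> 'g list \<Rightarrow> bool" where
  "homog V xs ds \<longleftrightarrow> list_all2 (\<lambda>x d. x \<in> V d) xs ds"

definition degree_zero_map :: "('g \<Rightarrow> 'v set) \<Rightarrow> ('v \<Rightarrow> 'v) \<Rightarrow> bool" where
  "degree_zero_map V f \<longleftrightarrow> (\<forall>g x. x \<in> V g \<longrightarrow> f x \<in> V g)"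

text \<open>An m-ary bracket is a function on lists; only its values on lists of
  length m matter.  Multilinear and of degree zero.\<close>
definition multilinear_bracket ::
  "('k::field \<Rightarrow> 'v::ab_group_add \<Rightarrow> 'v) \<Rightarrow> ('g::ab_group_add \<Rightarrow> 'v set) \<Rightarrow> nat \<Rightarrow> ('v list \<Rightarrow> 'v) \<Rightarrow> bool" where
  "multilinear_bracket scale V m br \<longleftrightarrow>
     (\<forall>xs i. length xs = m \<longrightarrow> i < m \<longrightarrow> Vector_Spaces.linear scale scale (\<lambda>y. br (xs[i := y]))) \<and>
     (\<forall>xs ds. length xs = m \<longrightarrow> homog V xs ds \<longrightarrow> br xs \<in> V (sum_list ds))"

definition hom_lie_color ::
  "('k::field \<Rightarrow> 'v::ab_group_add \<Rightarrow> 'v) \<Rightarrow> ('g::ab_group_add \<Rightarrow> 'v set) \<Rightarrow> nat \<Rightarrow>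
   ('v list \<Rightarrow> 'v) \<Rightarrow> ('g \<Rightarrow> 'g \<Rightarrow> 'k) \<Rightarrow> ('v \<Rightarrow> 'v) \<Rightarrow> bool" where
  "hom_lie_color scale V m br eps alpha \<longleftrightarrow>
     graded_space scale V \<and> bicharacter eps \<and>
     multilinear_bracket scale V m br \<and>
     Vector_Spaces.linear scale scale alpha \<and> degree_zero_map V alpha \<and>
     \<comment> \<open>(i) color skew-symmetry in adjacent arguments\<close>
     (\<forall>xs ds i. length xs = m \<longrightarrow> homog V xs ds \<longrightarrow> Suc i < m \<longrightarrow>
        br xs = - scale (eps (ds ! i) (ds ! Suc i)) (br (xs[i := xs ! Suc i, Suc i := xs ! i]))) \<and>
     \<comment> \<open>(ii) Hom-Jacobi (fundamental) identity\<close>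
     (\<forall>xs as ys bs. length xs = m - 1 \<longrightarrow> length ys = m \<longrightarrow> homog V xs as \<longrightarrow> homog V ys bs \<longrightarrow>
        br (map alpha xs @ [br ys]) =
        (\<Sum>i<m. scale (eps (sum_list as) (sum_list (take i bs)))
                 (br (map alpha (take i ys) @ [br (xs @ [ys ! i])] @ map alpha (drop (Suc i) ys)))))"

definition center :: "nat \<Rightarrow> ('v list \<Rightarrow> 'v::zero) \<Rightarrow> 'v set" where
  "center m br = {x. \<forall>ys. length ys = m - 1 \<longrightarrow> br (x # ys) = 0}"

definition apply_at :: "('v \<Rightarrow> 'v) \<Rightarrow> nat set \<Rightarrow> 'v list \<Rightarrow> 'v list" where
  "apply_at N S xs = map (\<lambda>i. if i \<in> S then N (xs ! i) else xs ! i) [0..<length xs]"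

fun brN :: "('v list \<Rightarrow> 'v::ab_group_add) \<Rightarrow> ('v \<Rightarrow> 'v) \<Rightarrow> nat \<Rightarrow> 'v list \<Rightarrow> 'v" where
  "brN br N 0 xs = br xs"
| "brN br N (Suc j) xs =
     (\<Sum>S\<in>{S. S \<subseteq> {..<length xs} \<and> card S = Suc j}. br (apply_at N S xs)) - N (brN br N j xs)"

definition nijenhuis ::
  "('k::field \<Rightarrow> 'v::ab_group_add \<Rightarrow> 'v) \<Rightarrow> ('g::ab_group_add \<Rightarrow> 'v set) \<Rightarrow> nat \<Rightarrow>
   ('v list \<Rightarrow> 'v) \<Rightarrow> ('v \<Rightarrow> 'v) \<Rightarrow> ('v \<Rightarrow> 'v) \<Rightarrow> bool" where
  "nijenhuis scale V m br alpha N \<longleftrightarrow>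
     Vector_Spaces.linear scale scale N \<and> degree_zero_map V N \<and>
     N \<circ> alpha = alpha \<circ> N \<and>
     (\<forall>xs. length xs = m \<longrightarrow> br (map N xs) = N (brN br N (m - 1) xs))"

end

theory Submission
  imports Defs
begin
lemma lin0: "Vector_Spaces.linear s s f \<Longrightarrow> f 0 = 0"
  by (metis Vector_Spaces.linear_iff_module_hom module_hom.zero)
lemma vs0: "vector_space s \<Longrightarrow> s c 0 = 0"
  by (simp add: module.scale_zero_right module_iff_vector_space)
lemma vs1: "vector_space s \<Longrightarrow> s 1 x = x"
  by (simp add: module.scale_one module_iff_vector_space)
lemma vs2: fixes s :: "'k::field_char_0\<Rightarrow>'v::ab_group_add\<Rightarrow>'v" and x :: 'v
  shows "vector_space s \<Longrightarrow> x + x = 0 \<Longrightarrow> x = 0"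
proof -
  assume vs: "vector_space s" and h: "x + x = 0"
  have m: "module s" using vs module_iff_vector_space by blast
  have "s 2 x = s 1 x + s 1 x" using module.scale_left_distrib[OF m, of 1 1 x] by simp
  also have "... = 0" using h module.scale_one[OF m] by simp
  finally show ?thesis using vector_space.scale_eq_0_iff[OF vs] by simp
qed
lemma eps0: assumes "bicharacter eps" shows "eps d 0 = 1" "eps 0 d = 1"
proof -
  have "eps d (0+0) = eps d 0 * eps d 0" "eps d 0 \<noteq> 0" using assms unfolding bicharacter_def by blast+
  then show "eps d 0 = 1" by simp
  have "eps (0+0) d = eps 0 d * eps 0 d" "eps 0 d \<noteq> 0" using assms unfolding bicharacter_def by blast+
  then show "eps 0 d = 1" by simp
qed

lemma homog_upd: "homog V zs ds \<Longrightarrow> x \<in> V d \<Longrightarrow> homog V (zs[k := x]) (ds[k := d])"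
  unfolding homog_def by (simp add: list_all2_update_cong)
lemma homog_nth: "homog V zs ds \<Longrightarrow> k < length zs \<Longrightarrow> zs ! k \<in> V (ds ! k)"
  unfolding homog_def by (simp add: list_all2_conv_all_nth)
lemma homog_len: "homog V zs ds \<Longrightarrow> length ds = length zs"
  unfolding homog_def by (simp add: list_all2_lengthD)

lemma twoa:
  fixes scale :: "'k::field_char_0 \<Rightarrow> 'v::ab_group_add \<Rightarrow> 'v"
    and V :: "'g::ab_group_add \<Rightarrow> 'v set"
  assumes H: "hom_lie_color scale V n br eps alpha"
  shows "homog V zs ds \<Longrightarrow> length zs = n \<Longrightarrow> i < j \<Longrightarrow> j < n \<Longrightarrow> zs!i = a \<Longrightarrow> zs!j = a
     \<Longrightarrow> ds!i = 0 \<Longrightarrow> ds!j = 0 \<Longrightarrow> br zs = 0"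
proof (induction j arbitrary: zs ds)
  case 0 then show ?case by simp
next
  case (Suc j)
  have vs: "vector_space scale" and bc: "bicharacter eps"
    using H unfolding hom_lie_color_def graded_space_def by auto
  have skew: "\<And>xs ds i. length xs = n \<Longrightarrow> homog V xs ds \<Longrightarrow> Suc i < n \<Longrightarrow>
        br xs = - scale (eps (ds ! i) (ds ! Suc i)) (br (xs[i := xs ! Suc i, Suc i := xs ! i]))"
    using H unfolding hom_lie_color_def by blast
  show ?case
  proof (cases "j = i")
    case True
    have "br zs = - scale (eps (ds ! j) (ds ! Suc j)) (br (zs[j := zs ! Suc j, Suc j := zs ! j]))"
      using skew Suc.prems by blast
    also have "zs[j := zs ! Suc j, Suc j := zs ! j] = zs" using Suc.prems True by (metis list_update_id)
    finally have "br zs = - br zs" using Suc.prems True eps0[OF bc] vs1[OF vs] by simp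
    then have "br zs + br zs = 0" by (metis add.right_inverse)
    then show ?thesis using vs2[OF vs] by blast
  next
    case False
    hence ij: "i < j" using Suc.prems by simp
    define zs' where "zs' = zs[j := zs ! Suc j, Suc j := zs ! j]"
    define ds' where "ds' = ds[j := ds ! Suc j, Suc j := ds ! j]"
    have ld: "length ds = n" using homog_len[OF Suc.prems(1)] Suc.prems by simp
    have "br zs = - scale (eps (ds ! j) (ds ! Suc j)) (br zs')"
      using skew Suc.prems unfolding zs'_def by blast
    hence e: "br zs = - br zs'" using Suc.prems eps0[OF bc] vs1[OF vs] by simp
    have hz: "homog V zs' ds'" unfolding zs'_def ds'_def
      using Suc.prems homog_nth[OF Suc.prems(1), of j] homog_nth[OF Suc.prems(1), of "Suc j"]
      by (intro homog_upd) auto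
    have "br zs' = 0"
      apply (rule Suc.IH[OF hz])
      using Suc.prems ij ld unfolding zs'_def ds'_def by auto
    then show ?thesis using e by simp
  qed
qed

lemma len_apply_at: "length (apply_at N S xs) = length xs"
  unfolding apply_at_def by simp

lemma apply_at_cons: "apply_at N S (a # xs) = (if 0 \<in> S then N a else a) # apply_at N {i. Suc i \<in> S} xs"
  unfolding apply_at_def by (simp add: map_upt_Suc del: upt_Suc)

lemma fam_eq: "{S. S \<subseteq> {..<Suc L} \<and> card S = k \<and> 0 \<notin> S} = (\<lambda>S. Suc ` S) ` {S. S \<subseteq> {..<L} \<and> card S = k}"
proof
  show "(\<lambda>S. Suc ` S) ` {S. S \<subseteq> {..<L} \<and> card S = k} \<subseteq> {S. S \<subseteq> {..<Suc L} \<and> card S = k \<and> 0 \<notin> S}"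
    by (auto simp: card_image)
next
  show "{S. S \<subseteq> {..<Suc L} \<and> card S = k \<and> 0 \<notin> S} \<subseteq> (\<lambda>S. Suc ` S) ` {S. S \<subseteq> {..<L} \<and> card S = k}"
  proof
    fix S assume S: "S \<in> {S. S \<subseteq> {..<Suc L} \<and> card S = k \<and> 0 \<notin> S}"
    have e: "S = Suc ` {i. Suc i \<in> S}"
    proof (rule set_eqI, rule iffI)
      fix x assume "x \<in> S" then show "x \<in> Suc ` {i. Suc i \<in> S}" using S
        by (cases x) auto
    qed auto
    have "card {i. Suc i \<in> S} = k" using S e by (metis (mono_tags, lifting) card_image inj_Suc inj_on_subset subset_UNIV mem_Collect_eq)
    moreover have "{i. Suc i \<in> S} \<subseteq> {..<L}" using S by auto
    ultimately show "S \<in> (\<lambda>S. Suc ` S) ` {S. S \<subseteq> {..<L} \<and> card S = k}" using e by blast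
  qed
qed

lemma brN_cons:
  assumes cen: "\<And>ys. length ys = length xs \<Longrightarrow> br (N a # ys) = 0"
  shows "brN br N j (a # xs) = brN (\<lambda>ys. br (a # ys)) N j xs"
proof (induction j)
  case 0 then show ?case by simp
next
  case (Suc j)
  let ?F = "{S. S \<subseteq> {..<Suc (length xs)} \<and> card S = Suc j}"
  let ?H = "{S. S \<subseteq> {..<Suc (length xs)} \<and> card S = Suc j \<and> 0 \<notin> S}"
  let ?G = "{S. S \<subseteq> {..<length xs} \<and> card S = Suc j}"
  have fin: "finite ?F" by (rule finite_subset[of _ "Pow {..<Suc (length xs)}"]) auto
  have s1: "(\<Sum>S\<in>?F. br (apply_at N S (a # xs))) = (\<Sum>S\<in>?H. br (apply_at N S (a # xs)))"
    by (rule sum.mono_neutral_right[OF fin]) (auto simp: apply_at_cons cen len_apply_at)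
  have s2: "(\<Sum>S\<in>?H. br (apply_at N S (a # xs))) = (\<Sum>S\<in>?G. br (apply_at N (Suc ` S) (a # xs)))"
    unfolding fam_eq by (subst sum.reindex) (auto simp: inj_on_def inj_image_eq_iff)
  have s3: "\<And>S. br (apply_at N (Suc ` S) (a # xs)) = br (a # apply_at N S xs)"
    by (simp add: apply_at_cons image_iff)
  have eq: "(\<Sum>S\<in>?F. br (apply_at N S (a # xs))) = (\<Sum>S\<in>?G. br (a # apply_at N S xs))"
    using s1 s2 s3 by simp
  show ?case using eq Suc.IH by simp
qed

lemma fam_full: "{S. S \<subseteq> {..<L} \<and> card S = L} = {{..<L::nat}}"
  using card_subset_eq[of "{..<L}"] by auto

lemma apply_at_full: "length xs = L \<Longrightarrow> apply_at N {..<L} xs = map N xs"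
  unfolding apply_at_def by (rule nth_equalityI) auto

theorem proposition6p4:
  fixes scale :: "'k::field_char_0 \<Rightarrow> 'v::ab_group_add \<Rightarrow> 'v"
    and V :: "'g::ab_group_add \<Rightarrow> 'v set"
    and br :: "'v list \<Rightarrow> 'v" and eps :: "'g \<Rightarrow> 'g \<Rightarrow> 'k"
    and alpha N :: "'v \<Rightarrow> 'v" and n :: nat and a :: 'v
  assumes "hom_lie_color scale V n br eps alpha"
    and "n \<ge> 3"
    and "nijenhuis scale V n br alpha N"
    and "bij N"
    and "a \<in> V 0"
    and "alpha a = a"
    and "N a \<in> center n br"
  shows "hom_lie_color scale V (n - 1) (\<lambda>xs. br (a # xs)) eps alpha
       \<and> nijenhuis scale V (n - 1) (\<lambda>xs. br (a # xs)) alpha N"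
proof
  note H = assms(1)
  have gs: "graded_space scale V" and bc: "bicharacter eps"
    and mlb: "multilinear_bracket scale V n br"
    and la: "Vector_Spaces.linear scale scale alpha" and da: "degree_zero_map V alpha"
    and skew: "\<And>xs ds i. length xs = n \<Longrightarrow> homog V xs ds \<Longrightarrow> Suc i < n \<Longrightarrow>
        br xs = - scale (eps (ds ! i) (ds ! Suc i)) (br (xs[i := xs ! Suc i, Suc i := xs ! i]))"
    and jac: "\<And>xs as ys bs. length xs = n - 1 \<Longrightarrow> length ys = n \<Longrightarrow> homog V xs as \<Longrightarrow> homog V ys bs \<Longrightarrow>
        br (map alpha xs @ [br ys]) =
        (\<Sum>i<n. scale (eps (sum_list as) (sum_list (take i bs)))
                 (br (map alpha (take i ys) @ [br (xs @ [ys ! i])] @ map alpha (drop (Suc i) ys))))"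
    using H unfolding hom_lie_color_def by blast+
  have vs: "vector_space scale" using gs unfolding graded_space_def by blast
  have lin: "\<And>xs i. length xs = n \<Longrightarrow> i < n \<Longrightarrow> Vector_Spaces.linear scale scale (\<lambda>y. br (xs[i := y]))"
    and deg: "\<And>xs ds. length xs = n \<Longrightarrow> homog V xs ds \<Longrightarrow> br xs \<in> V (sum_list ds)"
    using mlb unfolding multilinear_bracket_def by blast+
  have hc: "\<And>xs ds. homog V xs ds \<Longrightarrow> homog V (a # xs) (0 # ds)"
    using assms(5) unfolding homog_def by simp
  have n1: "n = Suc (n - 1)" and n2: "n - 1 = Suc (n - 1 - 1)" using assms(2) by auto
  show "hom_lie_color scale V (n - 1) (\<lambda>xs. br (a # xs)) eps alpha"
    unfolding hom_lie_color_def
  proof (intro conjI allI impI)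
    show "graded_space scale V" "bicharacter eps" "Vector_Spaces.linear scale scale alpha"
      "degree_zero_map V alpha" by fact+
    show "multilinear_bracket scale V (n - 1) (\<lambda>xs. br (a # xs))"
      unfolding multilinear_bracket_def
    proof (intro conjI allI impI)
      fix xs :: "'v list" and i assume "length xs = n - 1" "i < n - 1"
      then have "Vector_Spaces.linear scale scale (\<lambda>y. br ((a # xs)[Suc i := y]))"
        using lin[of "a # xs" "Suc i"] n1 by simp
      then show "Vector_Spaces.linear scale scale (\<lambda>y. br (a # xs[i := y]))" by simp
    next
      fix xs :: "'v list" and ds assume "length xs = n - 1" "homog V xs ds"
      then show "br (a # xs) \<in> V (sum_list ds)"
        using deg[of "a # xs" "0 # ds"] hc n1 by simp
    qed
  next
    fix xs :: "'v list" and ds i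
    assume A: "length xs = n - 1" "homog V xs ds" "Suc i < n - 1"
    have "br (a # xs) = - scale (eps ((0 # ds) ! Suc i) ((0 # ds) ! Suc (Suc i)))
        (br ((a # xs)[Suc i := (a # xs) ! Suc (Suc i), Suc (Suc i) := (a # xs) ! Suc i]))"
      using skew[of "a # xs" "0 # ds" "Suc i"] hc A n1 by simp
    then show "br (a # xs) = - scale (eps (ds ! i) (ds ! Suc i)) (br (a # xs[i := xs ! Suc i, Suc i := xs ! i]))"
      by simp
  next
    fix xs :: "'v list" and as ys bs
    assume A: "length xs = n - 1 - 1" "length ys = n - 1" "homog V xs as" "homog V ys bs"
    have l1: "length (a # xs) = n - 1" and l2: "length (a # ys) = n" using A n1 n2 by simp_all
    note J0 = jac[OF l1 l2 hc[OF A(3)] hc[OF A(4)]]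
    have shift: "\<And>f :: nat \<Rightarrow> 'v. (\<Sum>i<n. f i) = f 0 + (\<Sum>i<n - 1. f (Suc i))"
      using n1 by (metis sum.lessThan_Suc_shift)
    have z: "br ((a # xs) @ [a]) = 0"
    proof (rule twoa[OF H, of _ "0 # as @ [0]" 0 "Suc (length xs)" a])
      show "homog V ((a # xs) @ [a]) (0 # as @ [0])" using A(3) assms(5) unfolding homog_def
        by (simp add: list_all2_appendI)
      have "length as = length xs" using A(3) homog_len by blast
      then show "(0 # as @ [0]) ! Suc (length xs) = 0" by (simp add: nth_append)
    qed (use A n1 n2 in \<open>auto simp: nth_append\<close>)
    have z2: "br (0 # map alpha ys) = 0"
      using lin0[OF lin[of "0 # map alpha ys" 0]] A n1 by (metis length_Cons length_map list_update_code(2) zero_less_Suc)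
    have "br (a # map alpha xs @ [br (a # ys)]) = br (map alpha (a # xs) @ [br (a # ys)])"
      using assms(6) by simp
    also have "... = (\<Sum>i<n - 1. scale (eps (sum_list (0 # as)) (sum_list (take (Suc i) (0 # bs))))
                 (br (map alpha (take (Suc i) (a # ys)) @ [br ((a # xs) @ [(a # ys) ! Suc i])] @ map alpha (drop (Suc (Suc i)) (a # ys)))))"
      unfolding J0 shift using z z2 vs0[OF vs] by simp
    also have "... = (\<Sum>i<n - 1. scale (eps (sum_list as) (sum_list (take i bs)))
                 (br (a # map alpha (take i ys) @ [br (a # xs @ [ys ! i])] @ map alpha (drop (Suc i) ys))))"
      using assms(6) by simp
    finally show "br (a # map alpha xs @ [br (a # ys)]) =
        (\<Sum>i<n - 1. scale (eps (sum_list as) (sum_list (take i bs)))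
                 (br (a # map alpha (take i ys) @ [br (a # xs @ [ys ! i])] @ map alpha (drop (Suc i) ys))))" .
  qed
  have NN: "Vector_Spaces.linear scale scale N" "degree_zero_map V N" "N \<circ> alpha = alpha \<circ> N"
    and Nid: "\<And>xs. length xs = n \<Longrightarrow> br (map N xs) = N (brN br N (n - 1) xs)"
    using assms(3) unfolding nijenhuis_def by blast+
  show "nijenhuis scale V (n - 1) (\<lambda>xs. br (a # xs)) alpha N"
    unfolding nijenhuis_def
  proof (intro conjI allI impI)
    show "Vector_Spaces.linear scale scale N" "degree_zero_map V N" "N \<circ> alpha = alpha \<circ> N" by fact+
    fix xs :: "'v list" assume L: "length xs = n - 1"
    have cen: "\<And>ys. length ys = length xs \<Longrightarrow> br (N a # ys) = 0"
      using assms(7) L unfolding center_def by simp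
    have "N (brN br N (n - 1) (a # xs)) = br (map N (a # xs))"
      using Nid[of "a # xs"] L n1 by simp
    also have "... = 0" using cen[of "map N xs"] by simp
    also have "... = N 0" using lin0[OF NN(1)] by simp
    finally have "brN br N (n - 1) (a # xs) = 0"
      using assms(4) by (meson bij_def injD)
    then have "brN (\<lambda>ys. br (a # ys)) N (Suc (n - 1 - 1)) xs = 0"
      using brN_cons[of xs br N a, OF cen] n2 by metis
    then have "br (a # apply_at N {..<n - 1} xs) - N (brN (\<lambda>ys. br (a # ys)) N (n - 1 - 1) xs) = 0"
      using L n2[symmetric] fam_full[of "n - 1"] by simp
    then show "br (a # map N xs) = N (brN (\<lambda>ys. br (a # ys)) N (n - 1 - 1) xs)"
      using apply_at_full[OF L] by simp
  qed
qed
end
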